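(* Let $A\in\mathbb{R}^{n\times n}$ be symmetric positive definite, $M_0\in\mathbb{R}^{n\times n}$, and let $(M_i,R_i,G_i,P_i)$ be the NCG sequence defined in the context (assumed not to break down). Then for $i=1,2,\dots$, $$M_i\in M_0+\mathcal{K}_i(A^2,G_0)\quad\text{and}\quad R_i=I_n-AM_i\perp\mathcal{K}_i(A^2,G_0),$$ where $\mathcal{K}_i(A^2,G_0)=\mathrm{span}\{G_0,A^2G_0,\dots,A^{2(i-1)}G_0\}$ and $G_0=-AR_0$. Moreover, the search directions $P_0,\dots,P_{i-1}$ form an $A$-orthogonal basis (i.e. $(P_j,AP_k)_F=0$ for $j\neq k$) of this Krylov subspace, and $$\mathrm{span}\{P_0,\dots,P_{i-1}\}=\mathrm{span}\{G_0,\dots,G_{i-1}\}=\mathcal{K}_i(A^2,G_0).$$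
   Context: The Frobenius inner product on $\mathbb{R}^{n\times n}$ is $(X,Y)_F=\operatorname{tr}(X^TY)$; orthogonality $\perp$ is with respect to it. The NCG method: given $M_0$, set $R_i:=I_n-AM_i$ and $G_i:=-AR_i$, $P_0:=-G_0$. For $i\ge1$, $P_i$ is the element of $-G_i+\mathrm{span}\{P_{i-1}\}$ with $(P_i,AP_{i-1})_F=0$. For $i\ge0$, $M_{i+1}$ is the element of $M_i+\mathrm{span}\{P_i\}$ such that $(I_n-AM_{i+1},P_i)_F=0$. It is assumed that the iteration does not break down ($R_i\neq0$, $P_i\neq0$ for all indices considered), so that the iterates are uniquely determined. *)

theory Defs
  imports "HOL-Analysis.Analysis"
begin

type_synonym 'n mat = "real^'n^'n"

definition mtrace :: "'n::finite mat \<Rightarrow> real" where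
  "mtrace X = (\<Sum>i\<in>UNIV. X $ i $ i)"

definition frob :: "'n::finite mat \<Rightarrow> 'n mat \<Rightarrow> real" where
  "frob X Y = mtrace (transpose X ** Y)"

primrec mpow :: "'n::finite mat \<Rightarrow> nat \<Rightarrow> 'n mat" where
  "mpow B 0 = mat 1"
| "mpow B (Suc k) = B ** mpow B k"

definition krylov :: "nat \<Rightarrow> 'n::finite mat \<Rightarrow> 'n mat \<Rightarrow> 'n mat set" where
  "krylov i B G = span {mpow B k ** G | k. k < i}"

definition spd :: "'n::finite mat \<Rightarrow> bool" where
  "spd A \<longleftrightarrow> transpose A = A \<and> (\<forall>x. x \<noteq> 0 \<longrightarrow> x \<bullet> (A *v x) > 0)"

text \<open>The NCG relations up to step i (M_0,...,M_i and P_0,...,P_(i-1)),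
  with R_j = I - A M_j and G_j = - A R_j.\<close>
definition ncg_seq :: "'n::finite mat \<Rightarrow> (nat \<Rightarrow> 'n mat) \<Rightarrow> (nat \<Rightarrow> 'n mat)
    \<Rightarrow> (nat \<Rightarrow> 'n mat) \<Rightarrow> (nat \<Rightarrow> 'n mat) \<Rightarrow> nat \<Rightarrow> bool" where
  "ncg_seq A M R G P i \<longleftrightarrow>
     (\<forall>j. R j = mat 1 - A ** M j) \<and>
     (\<forall>j. G j = - (A ** R j)) \<and>
     P 0 = - G 0 \<and>
     (\<forall>j. 1 \<le> j \<and> j < i \<longrightarrow>
        P j \<in> {- G j + Y | Y. Y \<in> span {P (j - 1)}} \<and> frob (P j) (A ** P (j - 1)) = 0) \<and>
     (\<forall>j<i. M (Suc j) \<in> {M j + Y | Y. Y \<in> span {P j}} \<and>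
        frob (mat 1 - A ** M (Suc j)) (P j) = 0)"

end

theory Submission imports Defs begin

lemma frob_inner: "frob X Y = X \<bullet> Y"
  unfolding frob_def mtrace_def matrix_matrix_mult_def transpose_def inner_vec_def
  apply simp
  apply (rule sum.swap)
  done

lemma sym_inner:
  assumes "transpose A = A"
  shows "(A ** X) \<bullet> Y = X \<bullet> (A ** (Y::real^'n^'n))"
proof -
  have "(A ** X) \<bullet> Y = frob (A ** X) Y" by (simp add: frob_inner)
  also have "\<dots> = mtrace (transpose X ** transpose A ** Y)"
    by (simp add: frob_def matrix_transpose_mul)
  also have "\<dots> = frob X (A ** Y)" using assms by (simp add: frob_def matrix_mul_assoc)
  finally show ?thesis by (simp add: frob_inner)
qed

lemma inner_cols: "X \<bullet> (A ** X) = (\<Sum>j\<in>UNIV. column j X \<bullet> (A *v column j (X::real^'n^'n)))"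
  unfolding inner_vec_def matrix_matrix_mult_def matrix_vector_mult_def column_def
  apply simp
  apply (rule sum.swap)
  done

lemma pos_inner:
  assumes "spd A" "(X::real^'n^'n) \<noteq> 0"
  shows "X \<bullet> (A ** X) > 0"
proof -
  from assms(2) obtain i j where "X $ i $ j \<noteq> 0" by (metis vec_eq_iff zero_index)
  hence cj: "column j X \<noteq> 0" by (metis column_def vec_lambda_beta zero_index)
  have "\<forall>k\<in>UNIV. column k X \<bullet> (A *v column k X) \<ge> 0"
    using assms(1) unfolding spd_def by (metis inner_zero_left less_le order_refl)
  moreover have "column j X \<bullet> (A *v column j X) > 0" using assms(1) cj unfolding spd_def by blast
  ultimately have s: "0 < (\<Sum>k\<in>UNIV. column k X \<bullet> (A *v column k X))"
    by (intro sum_pos2[of UNIV j]) auto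
  have e: "X \<bullet> (A ** X) = (\<Sum>k\<in>UNIV. column k X \<bullet> (A *v column k X))"
    by (rule inner_cols)
  show ?thesis using e s by linarith
qed

lemma linear_mmul: "linear (\<lambda>X. (B::real^'n^'n) ** X)"
proof (rule linearI)
  show "B ** (X + Y) = B ** X + B ** Y" for X Y by (rule matrix_add_ldistrib)
  show "B ** (c *\<^sub>R X) = c *\<^sub>R (B ** X)" for c X
    using matrix_scalar_ac[of B c X] scalar_matrix_assoc[of c B X] by simp
qed

lemma krylov_mul: "X \<in> krylov m B G \<Longrightarrow> B ** X \<in> krylov (Suc m) B G"
proof -
  assume "X \<in> krylov m B G"
  hence "B ** X \<in> (\<lambda>X. B ** X) ` krylov m B G" by blast
  also have "\<dots> = span ((\<lambda>X. B ** X) ` {mpow B k ** G | k. k < m})"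
    unfolding krylov_def by (rule real_vector.linear_span_image[OF linear_mmul, symmetric])
  also have "\<dots> \<subseteq> krylov (Suc m) B G" unfolding krylov_def
  proof (rule span_mono, rule subsetI)
    fix y assume "y \<in> (\<lambda>X. B ** X) ` {mpow B k ** G | k. k < m}"
    then obtain k where k: "k < m" "y = B ** (mpow B k ** G)" by blast
    hence "y = mpow B (Suc k) ** G" by (simp add: matrix_mul_assoc)
    thus "y \<in> {mpow B k ** G | k. k < Suc m}" using k(1) by blast
  qed
  finally show ?thesis .
qed

lemma krylov_mono: "m \<le> m' \<Longrightarrow> krylov m B G \<subseteq> krylov m' B G"
  unfolding krylov_def by (rule span_mono) auto

lemma krylov_base: "G \<in> krylov (Suc m) B G"
  unfolding krylov_def by (rule span_base) (auto intro!: exI[of _ 0])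

lemma krylov_dim: "dim (krylov m B G) \<le> m"
proof -
  have "{mpow B k ** G | k. k < m} = (\<lambda>k. mpow B k ** G) ` {..<m}" by auto
  hence "card {mpow B k ** G | k. k < m} \<le> m" by (metis card_image_le card_lessThan finite_lessThan)
  moreover have "dim (krylov m B G) \<le> card {mpow B k ** G | k. k < m}"
    unfolding krylov_def
    by (rule dim_le_card) (auto simp: \<open>{mpow B k ** G | k. k < m} = _\<close>)
  ultimately show ?thesis by linarith
qed

lemma indep_Aorth:
  fixes Q :: "nat \<Rightarrow> real^'n^'n"
  assumes "spd A" "finite I" "\<forall>j\<in>I. Q j \<noteq> 0"
    and "\<forall>j\<in>I. \<forall>k\<in>I. j \<noteq> k \<longrightarrow> Q j \<bullet> (A ** Q k) = 0"
  shows "independent (Q ` I)" "inj_on Q I"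
proof -
  show inj: "inj_on Q I"
  proof (rule inj_onI)
    fix j k assume "j \<in> I" "k \<in> I" "Q j = Q k"
    show "j = k"
    proof (rule ccontr)
      assume "j \<noteq> k"
      hence "Q j \<bullet> (A ** Q k) = 0" using assms(4) \<open>j \<in> I\<close> \<open>k \<in> I\<close> by blast
      hence "Q j \<bullet> (A ** Q j) = 0" using \<open>Q j = Q k\<close> by simp
      moreover have "Q j \<bullet> (A ** Q j) > 0" using pos_inner[OF assms(1)] assms(3) \<open>j \<in> I\<close> by blast
      ultimately show False by simp
    qed
  qed
  show "independent (Q ` I)"
  proof
    assume "dependent (Q ` I)"
    then obtain u v where v: "v \<in> Q ` I" "u v \<noteq> 0" and s: "(\<Sum>w\<in>Q ` I. u w *\<^sub>R w) = 0"
      using real_vector.dependent_finite[OF finite_imageI[OF assms(2)]] by blast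
    from v obtain k where k: "k \<in> I" "v = Q k" by blast
    have "0 = (\<Sum>w\<in>Q ` I. u w *\<^sub>R w) \<bullet> (A ** v)" using s by simp
    also have "\<dots> = (\<Sum>w\<in>Q ` I. u w * (w \<bullet> (A ** v)))"
      by (simp add: inner_sum_left)
    also have "\<dots> = u v * (v \<bullet> (A ** v)) + (\<Sum>w\<in>Q ` I - {v}. u w * (w \<bullet> (A ** v)))"
      using v(1) assms(2) by (simp add: sum.remove)
    also have "(\<Sum>w\<in>Q ` I - {v}. u w * (w \<bullet> (A ** v))) = 0"
    proof (intro sum.neutral ballI)
      fix w assume "w \<in> Q ` I - {v}"
      then obtain j where "j \<in> I" "w = Q j" "j \<noteq> k" using k by auto
      thus "u w * (w \<bullet> (A ** v)) = 0" using assms(4) k by simp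
    qed
    finally have "u v * (v \<bullet> (A ** v)) = 0" by simp
    moreover have "v \<bullet> (A ** v) > 0" using pos_inner[OF assms(1)] assms(3) k by auto
    ultimately show False using v(2) by simp
  qed
qed


theorem proposition2:
  fixes A :: "real^'n^'n" and M R G P :: "nat \<Rightarrow> real^'n^'n" and i :: nat
  assumes "spd A"
    and "ncg_seq A M R G P i"
    and "\<forall>j<i. R j \<noteq> 0 \<and> P j \<noteq> 0"
    and "i \<ge> 1"
  shows "M i \<in> {M 0 + Y | Y. Y \<in> krylov i (A ** A) (G 0)}
     \<and> (\<forall>X\<in>krylov i (A ** A) (G 0). frob (R i) X = 0)
     \<and> (\<forall>j<i. \<forall>k<i. j \<noteq> k \<longrightarrow> frob (P j) (A ** P k) = 0)
     \<and> inj_on P {..<i} \<and> independent (P ` {..<i})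
     \<and> span (P ` {..<i}) = span (G ` {..<i})
     \<and> span (G ` {..<i}) = krylov i (A ** A) (G 0)"
proof -
  define K where "K m = krylov m (A ** A) (G 0)" for m
  have symA: "transpose A = A" using assms(1) by (simp add: spd_def)
  have Rd: "\<And>j. R j = mat 1 - A ** M j" and Gd: "\<And>j. G j = - (A ** R j)"
    and P0: "P 0 = - G 0" using assms(2) unfolding ncg_seq_def by auto
  have "\<forall>j. \<exists>b. 1 \<le> j \<and> j < i \<longrightarrow> P j = - G j + b *\<^sub>R P (j - 1)"
    using assms(2) unfolding ncg_seq_def by (auto simp: span_singleton)
  then obtain b where b: "\<And>j. 1 \<le> j \<Longrightarrow> j < i \<Longrightarrow> P j = - G j + b j *\<^sub>R P (j - 1)"
    by metis
  have Porth: "\<And>j. 1 \<le> j \<Longrightarrow> j < i \<Longrightarrow> P j \<bullet> (A ** P (j - 1)) = 0"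
    using assms(2) unfolding ncg_seq_def by (auto simp: frob_inner)
  have "\<forall>j. \<exists>a. j < i \<longrightarrow> M (Suc j) = M j + a *\<^sub>R P j"
    using assms(2) unfolding ncg_seq_def by (auto simp: span_singleton)
  then obtain a where a: "\<And>j. j < i \<Longrightarrow> M (Suc j) = M j + a j *\<^sub>R P j"
    by metis
  have Rorth: "\<And>j. j < i \<Longrightarrow> R (Suc j) \<bullet> P j = 0"
    using assms(2) unfolding ncg_seq_def by (auto simp: frob_inner Rd)
  have Rs: "R (Suc j) = R j - a j *\<^sub>R (A ** P j)" if "j < i" for j
    using a[OF that] by (simp add: Rd matrix_add_ldistrib matrix_scalar_ac scalar_matrix_assoc)
  have Gs: "G (Suc j) = G j + a j *\<^sub>R ((A ** A) ** P j)" if "j < i" for j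
  proof -
    have l: "linear (\<lambda>X. A ** X)" by (rule linear_mmul)
    have "A ** R (Suc j) = A ** R j - a j *\<^sub>R (A ** (A ** P j))"
      by (simp only: Rs[OF that] real_vector.linear_diff[OF l] real_vector.linear_scale[OF l])
    thus ?thesis by (simp add: Gd matrix_mul_assoc)
  qed
  have Pnz: "\<And>j. j < i \<Longrightarrow> P j \<noteq> 0" using assms(3) by auto
  have st1: "j < i \<longrightarrow> P j \<in> K (Suc j) \<and> G j \<in> K (Suc j) \<and> P j \<in> span (G ` {..j})" for j
  proof (induction j)
    case 0
    have g: "G 0 \<in> span {mpow (A ** A) k ** G 0 | k. k < Suc 0}"
      using krylov_base[of "G 0" 0 "A ** A"] by (simp add: krylov_def)
    have "- G 0 \<in> span {mpow (A ** A) k ** G 0 | k. k < Suc 0}" by (rule span_neg[OF g])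
    hence "P 0 \<in> K (Suc 0)" "G 0 \<in> K (Suc 0)" using g P0 by (simp_all add: K_def krylov_def)
    moreover have "G 0 \<in> span (G ` {..0})" by (rule span_base) simp
    hence "P 0 \<in> span (G ` {..0})" using span_neg[of "G 0" "G ` {..0}"] P0 by simp
    ultimately show ?case by simp
  next
    case (Suc j)
    show ?case
    proof
      assume j: "Suc j < i"
      with Suc have ih: "P j \<in> K (Suc j)" "G j \<in> K (Suc j)" "P j \<in> span (G ` {..j})" by auto
      have "G j \<in> K (Suc (Suc j))" using ih(2) krylov_mono[of "Suc j" "Suc (Suc j)"] by (auto simp: K_def)
      moreover have "(A ** A) ** P j \<in> K (Suc (Suc j))" using ih(1) krylov_mul by (auto simp: K_def)
      ultimately have g: "G (Suc j) \<in> K (Suc (Suc j))"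
        using Gs[of j] j by (auto simp: K_def krylov_def intro: span_add span_scale)
      have "P j \<in> K (Suc (Suc j))" using ih(1) krylov_mono[of "Suc j" "Suc (Suc j)"] by (auto simp: K_def)
      hence "P (Suc j) \<in> K (Suc (Suc j))" using g b[of "Suc j"] j
        by (auto simp: K_def krylov_def intro!: span_diff span_scale)
      moreover have "P (Suc j) \<in> span (G ` {..Suc j})"
      proof -
        have "span (G ` {..j}) \<subseteq> span (G ` {..Suc j})" by (rule span_mono) auto
        hence "P j \<in> span (G ` {..Suc j})" using ih(3) by auto
        moreover have "G (Suc j) \<in> span (G ` {..Suc j})" by (rule span_base) auto
        ultimately show ?thesis using b[of "Suc j"] j by (auto intro!: span_diff span_scale)
      qed
      ultimately show "P (Suc j) \<in> K (Suc (Suc j)) \<and> G (Suc j) \<in> K (Suc (Suc j))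
          \<and> P (Suc j) \<in> span (G ` {..Suc j})" using g by auto
    qed
  qed
  have spanK: "K m = span (P ` {..<m})"
    if m: "m \<le> i" and orth: "\<forall>j<m. \<forall>k<m. j \<noteq> k \<longrightarrow> P j \<bullet> (A ** P k) = 0" for m
  proof -
    have PK: "P ` {..<m} \<subseteq> K m"
    proof
      fix x assume "x \<in> P ` {..<m}"
      then obtain j where j: "j < m" "x = P j" by auto
      thus "x \<in> K m" using st1[of j] m krylov_mono[of "Suc j" m] by (auto simp: K_def)
    qed
    have ind: "independent (P ` {..<m})" "inj_on P {..<m}"
      using indep_Aorth[OF assms(1), of "{..<m}" P] orth Pnz m by auto
    have "dim (K m) \<le> card (P ` {..<m})"
      using krylov_dim[of m] ind(2) by (simp add: K_def card_image)
    hence "K m \<subseteq> span (P ` {..<m})" using card_ge_dim_independent[OF PK ind(1)] by auto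
    moreover have "span (P ` {..<m}) \<subseteq> K m"
      using PK by (intro span_minimal) (auto simp: K_def krylov_def)
    ultimately show ?thesis by auto
  qed
  have main: "m \<le> i \<longrightarrow> (\<forall>j<m. \<forall>k<m. j \<noteq> k \<longrightarrow> P j \<bullet> (A ** P k) = 0)
      \<and> (\<forall>k<m. R m \<bullet> P k = 0)" for m
  proof (induction m)
    case 0 show ?case by auto
  next
    case (Suc m)
    show ?case
    proof
      assume mi: "Suc m \<le> i"
      with Suc have aI: "\<forall>j<m. \<forall>k<m. j \<noteq> k \<longrightarrow> P j \<bullet> (A ** P k) = 0"
        and bI: "\<forall>k<m. R m \<bullet> P k = 0" by auto
      have new: "P m \<bullet> (A ** P k) = 0" if k: "k < m" for k
      proof (cases "k = m - 1")
        case True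
        thus ?thesis using Porth[of m] k mi by auto
      next
        case False
        hence k2: "Suc (Suc k) \<le> m" using k by auto
        have "(A ** A) ** P k \<in> K m"
          using st1[of k] k mi krylov_mul[of "P k" "Suc k" "A ** A" "G 0"]
            krylov_mono[OF k2, of "A ** A" "G 0"] by (auto simp: K_def)
        hence "(A ** A) ** P k \<in> span (P ` {..<m})" using spanK[of m] mi aI by auto
        hence "orthogonal (R m) ((A ** A) ** P k)"
          by (rule orthogonal_to_span) (use bI in \<open>auto simp: orthogonal_def\<close>)
        hence r0: "R m \<bullet> ((A ** A) ** P k) = 0" by (simp add: orthogonal_def)
        have "G m \<bullet> (A ** P k) = - ((A ** R m) \<bullet> (A ** P k))" by (simp add: Gd)
        also have "\<dots> = - (R m \<bullet> (A ** (A ** P k)))" using sym_inner[OF symA] by simp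
        also have "\<dots> = 0" using r0 by (simp add: matrix_mul_assoc)
        finally have g0: "G m \<bullet> (A ** P k) = 0" .
        have "m \<ge> 1" "m < i" using k mi by auto
        hence pm: "P m = - G m + b m *\<^sub>R P (m - 1)" using b[of m] by blast
        have "P m \<bullet> (A ** P k) = - (G m \<bullet> (A ** P k)) + b m * (P (m - 1) \<bullet> (A ** P k))"
          unfolding pm by (simp only: inner_add_left inner_minus_left inner_scaleR_left)
        also have "P (m - 1) \<bullet> (A ** P k) = 0" using aI False k by auto
        finally show ?thesis using g0 by simp
      qed
      have newA: "\<forall>j<Suc m. \<forall>k<Suc m. j \<noteq> k \<longrightarrow> P j \<bullet> (A ** P k) = 0"
      proof (intro allI impI)
        fix j k assume jk: "j < Suc m" "k < Suc m" "j \<noteq> k"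
        show "P j \<bullet> (A ** P k) = 0"
        proof (cases "j = m")
          case True thus ?thesis using new jk by auto
        next
          case False
          show ?thesis
          proof (cases "k = m")
            case True
            have "P j \<bullet> (A ** P k) = (A ** P k) \<bullet> P j" by (simp add: inner_commute)
            also have "\<dots> = P k \<bullet> (A ** P j)" using sym_inner[OF symA] by simp
            finally show ?thesis using new[of j] jk True False by auto
          next
            case False2: False
            thus ?thesis using aI jk False by auto
          qed
        qed
      qed
      have "\<forall>k<Suc m. R (Suc m) \<bullet> P k = 0"
      proof (intro allI impI)
        fix k assume k: "k < Suc m"
        show "R (Suc m) \<bullet> P k = 0"
        proof (cases "k = m")
          case True thus ?thesis using Rorth mi by auto
        next
          case False
          have "R (Suc m) \<bullet> P k = R m \<bullet> P k - a m * ((A ** P m) \<bullet> P k)"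
            using Rs[of m] mi by (simp add: inner_diff_left)
          also have "(A ** P m) \<bullet> P k = P m \<bullet> (A ** P k)" using sym_inner[OF symA] by simp
          finally show ?thesis using new[of k] bI k False by auto
        qed
      qed
      thus "(\<forall>j<Suc m. \<forall>k<Suc m. j \<noteq> k \<longrightarrow> P j \<bullet> (A ** P k) = 0)
          \<and> (\<forall>k<Suc m. R (Suc m) \<bullet> P k = 0)" using newA by auto
    qed
  qed
  have aI: "\<forall>j<i. \<forall>k<i. j \<noteq> k \<longrightarrow> P j \<bullet> (A ** P k) = 0" and bI: "\<forall>k<i. R i \<bullet> P k = 0"
    using main[of i] by auto
  have KP: "K i = span (P ` {..<i})" using spanK[of i] aI by auto
  have ind: "independent (P ` {..<i})" "inj_on P {..<i}"
    using indep_Aorth[OF assms(1), of "{..<i}" P] aI Pnz by auto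
  have Mm: "m \<le> i \<longrightarrow> M m - M 0 \<in> span (P ` {..<m})" for m
  proof (induction m)
    case 0 show ?case by (simp add: span_zero)
  next
    case (Suc m)
    show ?case
    proof
      assume mi: "Suc m \<le> i"
      have "span (P ` {..<m}) \<subseteq> span (P ` {..<Suc m})" by (rule span_mono) auto
      hence "M m - M 0 \<in> span (P ` {..<Suc m})" using Suc mi by auto
      moreover have "P m \<in> span (P ` {..<Suc m})" by (rule span_base) auto
      ultimately have "(M m - M 0) + a m *\<^sub>R P m \<in> span (P ` {..<Suc m})"
        by (intro span_add span_scale)
      thus "M (Suc m) - M 0 \<in> span (P ` {..<Suc m})" using a[of m] mi by (simp add: algebra_simps)
    qed
  qed
  have GK: "span (G ` {..<i}) \<subseteq> K i"
  proof (rule span_minimal)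
    show "G ` {..<i} \<subseteq> K i"
    proof
      fix x assume "x \<in> G ` {..<i}"
      then obtain j where j: "j < i" "x = G j" by auto
      have "K (Suc j) \<subseteq> K i" unfolding K_def by (rule krylov_mono) (use j in simp)
      thus "x \<in> K i" using st1[of j] j by blast
    qed
    show "subspace (K i)" unfolding K_def krylov_def by (rule subspace_span)
  qed
  have PG: "span (P ` {..<i}) \<subseteq> span (G ` {..<i})"
  proof (rule span_minimal)
    show "P ` {..<i} \<subseteq> span (G ` {..<i})"
    proof
      fix x assume "x \<in> P ` {..<i}"
      then obtain j where j: "j < i" "x = P j" by auto
      have "span (G ` {..j}) \<subseteq> span (G ` {..<i})" using j by (intro span_mono) auto
      thus "x \<in> span (G ` {..<i})" using st1[of j] j by blast
    qed
  qed (rule subspace_span)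
  have GP: "span (G ` {..<i}) \<subseteq> span (P ` {..<i})" using GK KP by simp
  have eq1: "span (P ` {..<i}) = span (G ` {..<i})" by (rule subset_antisym[OF PG GP])
  have eq2: "span (G ` {..<i}) = K i" using eq1 KP by simp
  have c1: "M i \<in> {M 0 + Y | Y. Y \<in> krylov i (A ** A) (G 0)}"
  proof -
    have "M i - M 0 \<in> krylov i (A ** A) (G 0)" using Mm[of i] KP by (simp add: K_def)
    moreover have "M i = M 0 + (M i - M 0)" by simp
    ultimately show ?thesis by blast
  qed
  have c2: "\<forall>X\<in>krylov i (A ** A) (G 0). frob (R i) X = 0"
  proof
    fix X assume "X \<in> krylov i (A ** A) (G 0)"
    hence X: "X \<in> span (P ` {..<i})" using KP by (simp add: K_def)
    have "orthogonal (R i) X"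
      by (rule orthogonal_to_span[OF X]) (use bI in \<open>auto simp: orthogonal_def\<close>)
    thus "frob (R i) X = 0" by (simp add: frob_inner orthogonal_def)
  qed
  have c3: "\<forall>j<i. \<forall>k<i. j \<noteq> k \<longrightarrow> frob (P j) (A ** P k) = 0"
    using aI by (simp add: frob_inner)
  have eq2': "span (G ` {..<i}) = krylov i (A ** A) (G 0)" using eq2 by (simp add: K_def)
  show ?thesis using c1 c2 c3 ind eq1 eq2' by blast
qed

end
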